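(* Let $q$ be a symmetric unimodal probability density on $\mathbb{R}$ with $h_q:=-\int_{\mathbb{R}} q(x)\log q(x)\,dx$ finite, and let $0<d_{\min}\le d_{\max}$ be constants. Let $X$ be a real random variable with probability density $p$ satisfying $$\frac{q(x)}{d_{\max}}\le p(x)\le \frac{q(x)}{d_{\min}}\quad\text{for all }x\in\mathbb{R}.$$ Then the differential entropy $h(X)=-\int p\log p$ satisfies $$h(X)\ \ge\ \frac{h_q}{d_{\max}}+\log d_{\min}-\left(\frac{1}{d_{\min}}-\frac{1}{d_{\max}}\right)\big[q(0)\log q(0)\big]^+,$$ $$h(X)\ \le\ \frac{h_q}{d_{\min}}+\log d_{\max}+\left(\frac{1}{d_{\min}}-\frac{1}{d_{\max}}\right)\big[q(0)\log q(0)\big]^+.$$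
   Context: Natural logarithms are used, and $[x]^+=\max(0,x)$. A probability density is symmetric unimodal if it satisfies $q(x)=q(-x)$ for all $x$ and is non-increasing on $[0,\infty)$. In the intended application $p(x)=q(x)/d(x)$ on $[-A/2,A/2)$ with $d_{\min}=1-\frac{A}{M}q(0)$ and $d_{\max}=1+\frac{A}{M}q(0)$ (assumed positive), so both bounds tend to $h_q$ as $M\to\infty$. *)

theory Defs
  imports "HOL-Probability.Probability"
begin

definition prob_density :: "(real \<Rightarrow> real) \<Rightarrow> bool" where
  "prob_density f \<longleftrightarrow> f \<in> borel_measurable borel \<and> (\<forall>x. 0 \<le> f x)
     \<and> integrable lborel f \<and> (\<integral>x. f x \<partial>lborel) = 1"

definition sym_unimodal_density :: "(real \<Rightarrow> real) \<Rightarrow> bool" where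
  "sym_unimodal_density q \<longleftrightarrow> prob_density q \<and> (\<forall>x. q x = q (- x))
     \<and> (\<forall>x y. 0 \<le> x \<longrightarrow> x \<le> y \<longrightarrow> q y \<le> q x)"

definition diff_entropy :: "(real \<Rightarrow> real) \<Rightarrow> real" where
  "diff_entropy f = - (\<integral>x. f x * ln (f x) \<partial>lborel)"

definition pos_part :: "real \<Rightarrow> real" where
  "pos_part x = max 0 x"

end

theory Submission
  imports Defs
begin

lemma pw:
  fixes p q dmin dmax :: real
  assumes d: "0 < dmin" "dmin \<le> dmax" and q0: "0 \<le> q"
    and lo: "q / dmax \<le> p" and up: "p \<le> q / dmin"
  shows "p * ln p \<le> q * ln q / dmax - p * ln dmin + (1/dmin - 1/dmax) * max 0 (q * ln q)"
    and "q * ln q / dmin - p * ln dmax - (1/dmin - 1/dmax) * max 0 (q * ln q) \<le> p * ln p"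
proof -
  have dmax: "0 < dmax" using d by linarith
  have c0: "0 \<le> 1/dmin - 1/dmax" using d by (simp add: frac_le)
  have "p * ln p \<le> q * ln q / dmax - p * ln dmin + (1/dmin - 1/dmax) * max 0 (q * ln q) \<and>
        q * ln q / dmin - p * ln dmax - (1/dmin - 1/dmax) * max 0 (q * ln q) \<le> p * ln p"
  proof (cases "q = 0")
    case True
    then have "p = 0" using lo up by simp
    then show ?thesis using True by simp
  next
    case False
    then have qp: "0 < q" using q0 by simp
    have pp: "0 < p" using lo qp dmax by (meson divide_pos_pos less_le_trans)
    have lnp: "ln p = ln q - ln (q / p)" using pp qp by (simp add: ln_div)
    have r1: "dmin \<le> q / p" using up pp d by (simp add: field_simps)
    have r2: "q / p \<le> dmax" using lo pp dmax by (simp add: field_simps)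
    have l1: "ln dmin \<le> ln (q/p)" using r1 d by simp
    have l2: "ln (q/p) \<le> ln dmax" using r2 pp qp dmax by (subst ln_le_cancel_iff) auto
    have A: "p * ln q \<le> q * ln q / dmax + (1/dmin - 1/dmax) * max 0 (q * ln q)"
    proof (cases "ln q \<le> 0")
      case True
      have "p * ln q \<le> (q / dmax) * ln q" using mult_right_mono_neg[OF lo True] .
      moreover have "0 \<le> (1/dmin - 1/dmax) * max 0 (q * ln q)" using c0 by simp
      ultimately show ?thesis by simp
    next
      case False
      have "p * ln q \<le> (q / dmin) * ln q" using mult_right_mono[OF up] False by simp
      moreover have "max 0 (q * ln q) = q * ln q" using False qp by simp
      ultimately show ?thesis by (simp add: algebra_simps)
    qed
    have B: "q * ln q / dmin - (1/dmin - 1/dmax) * max 0 (q * ln q) \<le> p * ln q"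
    proof (cases "ln q \<le> 0")
      case True
      have "(q / dmin) * ln q \<le> p * ln q" using mult_right_mono_neg[OF up True] .
      moreover have "0 \<le> (1/dmin - 1/dmax) * max 0 (q * ln q)" using c0 by simp
      ultimately show ?thesis by simp
    next
      case False
      have "(q / dmax) * ln q \<le> p * ln q" using mult_right_mono[OF lo] False by simp
      moreover have "max 0 (q * ln q) = q * ln q" using False qp by simp
      ultimately show ?thesis by (simp add: algebra_simps)
    qed
    have C: "p * ln dmin \<le> p * ln (q/p)" using l1 pp by simp
    have D: "p * ln (q/p) \<le> p * ln dmax" using l2 pp by simp
    show ?thesis using A B C D unfolding lnp by (simp add: algebra_simps)
  qed
  then show "p * ln p \<le> q * ln q / dmax - p * ln dmin + (1/dmin - 1/dmax) * max 0 (q * ln q)"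
    and "q * ln q / dmin - p * ln dmax - (1/dmin - 1/dmax) * max 0 (q * ln q) \<le> p * ln p"
    by auto
qed

lemma pw2:
  fixes q q0 :: real
  assumes "0 \<le> q" "q \<le> q0"
  shows "max 0 (q * ln q) \<le> q * max 0 (ln q0)"
proof (cases "q \<le> 1")
  case True
  then have "q * ln q \<le> 0" using assms by (cases "q = 0") (auto intro!: mult_nonneg_nonpos)
  then show ?thesis using assms by simp
next
  case False
  then have "ln q \<le> ln q0" using assms by simp
  then have "q * ln q \<le> q * max 0 (ln q0)" using assms
    by (meson max.cobounded2 mult_left_mono order_trans)
  moreover have "0 \<le> q * max 0 (ln q0)" using assms by simp
  ultimately show ?thesis by simp
qed

theorem mainTheorem4:
  fixes q p :: "real \<Rightarrow> real" and dmin dmax :: real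
    and M :: "'a measure" and X :: "'a \<Rightarrow> real"
  assumes q: "sym_unimodal_density q"
    and hq_finite: "integrable lborel (\<lambda>x. q x * ln (q x))"
    and dmin_pos: "0 < dmin" and dmin_le: "dmin \<le> dmax"
    and M: "prob_space M"
    and X: "distributed M lborel X (\<lambda>x. ennreal (p x))"
    and lower: "\<And>x. q x / dmax \<le> p x"
    and upper: "\<And>x. p x \<le> q x / dmin"
  shows "integrable lborel (\<lambda>x. p x * ln (p x))
    \<and> diff_entropy p \<ge> diff_entropy q / dmax + ln dmin
           - (1 / dmin - 1 / dmax) * pos_part (q 0 * ln (q 0))
    \<and> diff_entropy p \<le> diff_entropy q / dmin + ln dmax
           + (1 / dmin - 1 / dmax) * pos_part (q 0 * ln (q 0))"
proof -
  define c where "c = 1/dmin - 1/dmax"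
  define L where "L = max 0 (ln (q 0))"
  define m where "m = (\<lambda>x. max 0 (q x * ln (q x)))"
  have dmax: "0 < dmax" using dmin_pos dmin_le by linarith
  have c0: "0 \<le> c" unfolding c_def using dmin_pos dmin_le by (simp add: frac_le)
  have qnn: "\<And>x. 0 \<le> q x" and qm: "q \<in> borel_measurable borel"
    and qi: "integrable lborel q" and qint: "(\<integral>x. q x \<partial>lborel) = 1"
    using q unfolding sym_unimodal_density_def prob_density_def by auto
  have qle: "q x \<le> q 0" for x
  proof (cases "0 \<le> x")
    case True then show ?thesis using q unfolding sym_unimodal_density_def by auto
  next
    case False
    have mono: "\<forall>x y. 0 \<le> x \<longrightarrow> x \<le> y \<longrightarrow> q y \<le> q x"
      using q unfolding sym_unimodal_density_def by auto
    have "q (-x) \<le> q 0" using mono[rule_format, of 0 "-x"] False by simp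
    moreover have "q x = q (-x)" using q unfolding sym_unimodal_density_def by auto
    ultimately show ?thesis by simp
  qed
  have pnn: "\<And>x. 0 \<le> p x" using lower qnn dmax by (meson divide_nonneg_pos order_trans)
  have pm: "p \<in> borel_measurable borel"
    using distributed_real_measurable[OF _ X] pnn by simp
  have qm': "q \<in> borel_measurable lborel" using qm by simp
  have pm': "p \<in> borel_measurable lborel" using pm by simp
  have pi: "integrable lborel p"
  proof (rule Bochner_Integration.integrable_bound[of _ "\<lambda>x. q x / dmin"])
    show "integrable lborel (\<lambda>x. q x / dmin)" using qi by simp
    show "p \<in> borel_measurable lborel" using pm' .
    show "AE x in lborel. norm (p x) \<le> norm (q x / dmin)"
      using pnn upper qnn dmin_pos by auto
  qed
  have pint: "(\<integral>x. p x \<partial>lborel) = 1"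
  proof -
    have "(\<integral>x. p x * 1 \<partial>lborel) = (\<integral>x. 1 \<partial>M)"
      by (rule distributed_integral[OF X]) (auto simp: pnn)
    also have "\<dots> = 1" using M by (simp add: prob_space.prob_space)
    finally show ?thesis by simp
  qed
  have mi: "integrable lborel m" unfolding m_def using hq_finite by auto
  have U: "\<And>x. p x * ln (p x) \<le> q x * ln (q x) / dmax - p x * ln dmin + c * m x"
    using pw(1)[OF dmin_pos dmin_le qnn lower upper] unfolding c_def m_def by blast
  have Lo: "\<And>x. q x * ln (q x) / dmin - p x * ln dmax - c * m x \<le> p x * ln (p x)"
    using pw(2)[OF dmin_pos dmin_le qnn lower upper] unfolding c_def m_def by blast
  have Ui: "integrable lborel (\<lambda>x. q x * ln (q x) / dmax - p x * ln dmin + c * m x)"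
    using hq_finite pi mi by auto
  have Loi: "integrable lborel (\<lambda>x. q x * ln (q x) / dmin - p x * ln dmax - c * m x)"
    using hq_finite pi mi by auto
  have phim: "(\<lambda>x. p x * ln (p x)) \<in> borel_measurable lborel" using pm' by measurable
  have phii: "integrable lborel (\<lambda>x. p x * ln (p x))"
  proof (rule Bochner_Integration.integrable_bound[of _
        "\<lambda>x. \<bar>q x * ln (q x) / dmax - p x * ln dmin + c * m x\<bar>
           + \<bar>q x * ln (q x) / dmin - p x * ln dmax - c * m x\<bar>"])
    show "integrable lborel (\<lambda>x. \<bar>q x * ln (q x) / dmax - p x * ln dmin + c * m x\<bar>
           + \<bar>q x * ln (q x) / dmin - p x * ln dmax - c * m x\<bar>)"
      using Ui Loi by auto
    show "(\<lambda>x. p x * ln (p x)) \<in> borel_measurable lborel" using phim .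
    show "AE x in lborel. norm (p x * ln (p x)) \<le> norm (\<bar>q x * ln (q x) / dmax - p x * ln dmin + c * m x\<bar>
           + \<bar>q x * ln (q x) / dmin - p x * ln dmax - c * m x\<bar>)"
    proof (rule AE_I2)
      fix x
      show "norm (p x * ln (p x)) \<le> norm (\<bar>q x * ln (q x) / dmax - p x * ln dmin + c * m x\<bar>
           + \<bar>q x * ln (q x) / dmin - p x * ln dmax - c * m x\<bar>)"
        using U[of x] Lo[of x] by (simp add: abs_le_iff) linarith
    qed
  qed
  define H where "H = (\<integral>x. q x * ln (q x) \<partial>lborel)"
  define Im where "Im = (\<integral>x. m x \<partial>lborel)"
  have Im_le: "Im \<le> L"
  proof -
    have "Im \<le> (\<integral>x. q x * L \<partial>lborel)" unfolding Im_def
      by (rule integral_mono) (use mi qi pw2[OF qnn qle] in \<open>auto simp: m_def L_def\<close>)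
    also have "\<dots> = L" using qint by simp
    finally show ?thesis .
  qed
  have Lpos: "L \<le> pos_part (q 0 * ln (q 0))"
  proof (cases "q 0 \<le> 1")
    case True
    then have "L = 0" unfolding L_def using qnn[of 0] by (cases "q 0 = 0") auto
    then show ?thesis by (simp add: pos_part_def)
  next
    case False
    then have "ln (q 0) \<le> q 0 * ln (q 0)" by (simp add: mult_le_cancel_right1)
    then show ?thesis unfolding L_def pos_part_def using False by auto
  qed
  have I1: "(\<integral>x. p x * ln (p x) \<partial>lborel) \<le> H / dmax - ln dmin + c * Im"
  proof -
    have "(\<integral>x. p x * ln (p x) \<partial>lborel) \<le> (\<integral>x. q x * ln (q x) / dmax - p x * ln dmin + c * m x \<partial>lborel)"
      by (rule integral_mono[OF phii Ui U])
    also have "\<dots> = H / dmax - ln dmin + c * Im"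
      using hq_finite pi mi pint unfolding H_def Im_def by simp
    finally show ?thesis .
  qed
  have I2: "H / dmin - ln dmax - c * Im \<le> (\<integral>x. p x * ln (p x) \<partial>lborel)"
  proof -
    have "H / dmin - ln dmax - c * Im = (\<integral>x. q x * ln (q x) / dmin - p x * ln dmax - c * m x \<partial>lborel)"
      using hq_finite pi mi pint unfolding H_def Im_def by simp
    also have "\<dots> \<le> (\<integral>x. p x * ln (p x) \<partial>lborel)"
      by (rule integral_mono[OF Loi phii Lo])
    finally show ?thesis .
  qed
  have cIm: "c * Im \<le> c * pos_part (q 0 * ln (q 0))"
    using Im_le Lpos c0 by (meson mult_left_mono order_trans)
  show ?thesis
    using phii I1 I2 cIm unfolding diff_entropy_def H_def[symmetric] c_def[symmetric]
    by auto
qed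

end
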